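(* Let $s\ge4$ be an integer, $\psi_s(z):=z^{s-1}(z+s)-(s-1)^{s-1}$, and $\rho_m:=\min\{|s+\alpha|:\alpha$ a root of $\psi_s$ with $\operatorname{Im}\alpha>0\}$. (1) If $s$ is even then $\rho_m>s\sin(\pi/(s-1))>\pi$. (2) If $s\ge7$ is odd then $\rho_m>s\sin(2\pi/(s-1))$; if $s=5$ then $\rho_m>5\sin(2\pi/5)$.
   Context: For $s\ge4$, $\psi_s$ has $\lfloor s/2\rfloor-1\ge1$ roots in the open upper half-plane. *)

theory Defs
  imports "HOL-Analysis.Analysis"
begin

definition psi :: "nat \<Rightarrow> complex \<Rightarrow> complex" where
  "psi s z = z ^ (s - 1) * (z + of_nat s) - (of_nat s - 1) ^ (s - 1)"

definition rho_m :: "nat \<Rightarrow> real" where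
  "rho_m s = Min {cmod (of_nat s + \<alpha>) | \<alpha>. psi s \<alpha> = 0 \<and> Im \<alpha> > 0}"

end

theory Submission
  imports Defs
begin


lemma ucos_lt_sin:
  fixes u :: real assumes "0 < u" "u \<le> pi"
  shows "u * cos u - sin u < 0"
proof -
  have "(\<lambda>x. x * cos x - sin x) 0 > (\<lambda>x. x * cos x - sin x) u"
  proof (rule DERIV_neg_imp_decreasing_open[OF assms(1)])
    fix x :: real assume x: "0 < x" "x < u"
    have "((\<lambda>x. x * cos x - sin x) has_real_derivative (- x * sin x)) (at x)"
      by (auto intro!: derivative_eq_intros)
    moreover have "sin x > 0" using x assms by (intro sin_gt_zero) auto
    ultimately show "\<exists>y. ((\<lambda>x. x * cos x - sin x) has_real_derivative y) (at x) \<and> y < 0"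
      using x by (intro exI[of _ "- x * sin x"]) auto
  next
    show "continuous_on {0..u} (\<lambda>x. x * cos x - sin x)"
      by (intro continuous_intros)
  qed
  then show ?thesis by simp
qed

lemma sinc_dec:
  fixes x y :: real assumes "0 < x" "x < y" "y \<le> pi"
  shows "x * sin y < y * sin x"
proof -
  have "(\<lambda>u. sin u / u) x > (\<lambda>u. sin u / u) y"
  proof (rule DERIV_neg_imp_decreasing_open[OF assms(2)])
    fix u :: real assume u: "x < u" "u < y"
    have "((\<lambda>u. sin u / u) has_real_derivative ((cos u * u - sin u) / (u*u))) (at u)"
      using u assms by (auto intro!: derivative_eq_intros simp: power2_eq_square)
    moreover have "u * cos u - sin u < 0" using u assms by (intro ucos_lt_sin) auto
    moreover have "u * u > 0" using u assms by auto
    ultimately show "\<exists>d. ((\<lambda>u. sin u / u) has_real_derivative d) (at u) \<and> d < 0"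
      by (intro exI[of _ "(cos u * u - sin u) / (u*u)"]) (auto simp: divide_neg_pos mult.commute)
  next
    show "continuous_on {x..y} (\<lambda>u. sin u / u)"
      using assms by (intro continuous_intros) auto
  qed
  then show ?thesis using assms by (simp add: divide_simps mult.commute)
qed

lemma sin_cubic:
  fixes x :: real assumes "0 \<le> x"
  shows "x - x^3/6 \<le> sin x"
proof -
  obtain t where t: "sin x = (\<Sum>m<3. sin_coeff m * x ^ m) + (sin (t + 1/2 * real 3 * pi) / fact 3) * x ^ 3"
    using Maclaurin_sin_expansion[of x 3] by blast
  have e: "sin (t + 1/2 * real 3 * pi) = - cos t"
  proof -
    have "sin (t + 1/2 * real 3 * pi) = sin ((t + pi/2) + pi)" by (rule arg_cong[of _ _ sin]) simp
    also have "\<dots> = - sin (t + pi/2)" by (rule sin_periodic_pi)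
    also have "sin (t + pi/2) = cos t" by (simp add: sin_add)
    finally show ?thesis .
  qed
  have "(\<Sum>m<3. sin_coeff m * x ^ m) = x"
    by (simp add: sin_coeff_def eval_nat_numeral)
  with t e have "sin x = x - cos t * x^3 / 6" by (simp add: eval_nat_numeral)
  moreover have "cos t * x^3 \<le> x^3" using assms mult_right_mono[of "cos t" 1 "x^3"] by auto
  ultimately show ?thesis by simp
qed




lemma sin_mpi_minus: "sin (real m * pi - x) = - ((-1)^m) * sin x"
  by (simp add: sin_diff)
lemma cos_mpi_minus: "cos (real m * pi - x) = ((-1)^m) * cos x"
  by (simp add: cos_diff)

lemma angle_bound:
  fixes n :: nat and r \<theta> :: real
  assumes n: "n \<ge> 3" and r: "r > 0" and th: "0 < \<theta>" "\<theta> < pi"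
    and I: "r * sin ((real n + 1) * \<theta>) + (real n + 1) * sin (real n * \<theta>) = 0"
    and R: "r ^ n * (r * cos ((real n + 1) * \<theta>) + (real n + 1) * cos (real n * \<theta>)) = real n ^ n"
  shows "(odd n \<longrightarrow> \<theta> < pi - pi / real n) \<and> (even n \<longrightarrow> \<theta> < pi - 2 * pi / real n)"
proof -
  define t where "t = pi - \<theta>"
  have t: "0 < t" "t < pi" using th by (auto simp: t_def)
  define e where "e = ((-1::real) ^ n)"
  have e: "e = 1 \<or> e = -1" unfolding e_def by (cases "even n") auto
  have n0: "real n \<ge> 3" using n by simp
  have a1: "(real n + 1) * \<theta> = real (Suc n) * pi - (real n + 1) * t"
    by (simp add: t_def algebra_simps)
  have a2: "real n * \<theta> = real n * pi - real n * t"
    by (simp add: t_def algebra_simps)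
  have s1: "sin ((real n + 1) * \<theta>) = e * sin ((real n + 1) * t)"
    unfolding a1 sin_mpi_minus e_def by simp
  have c1: "cos ((real n + 1) * \<theta>) = - e * cos ((real n + 1) * t)"
    unfolding a1 cos_mpi_minus e_def by simp
  have s2: "sin (real n * \<theta>) = - e * sin (real n * t)"
    unfolding a2 sin_mpi_minus e_def by simp
  have c2: "cos (real n * \<theta>) = e * cos (real n * t)"
    unfolding a2 cos_mpi_minus e_def by simp
  define Y where "Y = (real n + 1) * cos (real n * t) - r * cos ((real n + 1) * t)"
  define S1 where "S1 = sin ((real n + 1) * t)"
  define S0 where "S0 = sin (real n * t)"
  have "e * (r * S1 - (real n + 1) * S0) = 0"
    using I unfolding s1 s2 S1_def S0_def by (simp add: algebra_simps)
  hence I': "r * S1 = (real n + 1) * S0" using e by auto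
  have R': "r ^ n * (e * Y) = real n ^ n"
    using R unfolding c1 c2 Y_def by (simp add: algebra_simps)
  have st: "sin t = S1 * cos (real n * t) - cos ((real n + 1) * t) * S0"
  proof -
    have "sin t = sin ((real n + 1) * t - real n * t)" by (simp add: algebra_simps)
    then show ?thesis unfolding sin_diff S1_def S0_def .
  qed
  have SY: "S1 * Y = (real n + 1) * sin t"
  proof -
    have "S1 * Y = (real n + 1) * S1 * cos (real n * t) - (r * S1) * cos ((real n + 1) * t)"
      by (simp add: Y_def algebra_simps)
    also have "\<dots> = (real n + 1) * sin t" unfolding I' st by (simp add: algebra_simps)
    finally show ?thesis .
  qed
  have sint: "sin t > 0" using t by (intro sin_gt_zero) auto
  have rn: "r ^ n > 0" using r by simp
  have nn: "real n ^ n > 0" using n by simp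
  show ?thesis
  proof (intro conjI impI)
    assume odd: "odd n"
    hence "e = -1" by (simp add: e_def)
    hence "r ^ n * (e * Y) = - (r ^ n * Y)" by simp
    with R' nn have "r ^ n * Y < 0" by linarith
    hence "Y < 0" using rn r by (simp add: mult_less_0_iff)
    moreover have "S1 * Y > 0" using SY sint by simp
    ultimately have "S1 < 0" by (simp add: zero_less_mult_iff)
    hence "r * S1 < 0" using r by (simp add: mult_pos_neg)
    hence "(real n + 1) * S0 < 0" using I' by simp
    hence "S0 < 0" using n0 by (simp add: mult_less_0_iff)
    show "\<theta> < pi - pi / real n"
    proof (rule ccontr)
      assume "\<not> ?thesis"
      hence "t \<le> pi / real n" by (simp add: t_def)
      hence "real n * t \<le> pi" using n0 by (simp add: field_simps)
      hence "S0 \<ge> 0" unfolding S0_def using t n0 by (intro sin_ge_zero) auto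
      with \<open>S0 < 0\<close> show False by simp
    qed
  next
    assume ev: "even n"
    hence "e = 1" by (simp add: e_def)
    hence "r ^ n * (e * Y) = r ^ n * Y" by simp
    with R' nn have "r ^ n * Y > 0" by linarith
    hence "Y > 0" using rn r by (simp add: zero_less_mult_iff)
    moreover have "S1 * Y > 0" using SY sint by simp
    ultimately have "S1 > 0" by (simp add: zero_less_mult_iff)
    hence "r * S1 > 0" using r by simp
    hence "(real n + 1) * S0 > 0" using I' by simp
    hence "S0 > 0" using n0 by (simp add: zero_less_mult_iff)
    show "\<theta> < pi - 2 * pi / real n"
    proof (rule ccontr)
      assume "\<not> ?thesis"
      hence "t \<le> 2 * pi / real n" by (simp add: t_def)
      hence nt2: "real n * t \<le> 2 * pi" using n0 by (simp add: field_simps)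
      have nt: "real n * t < pi"
      proof (rule ccontr)
        assume "\<not> ?thesis"
        hence "pi \<le> real n * t" by simp
        moreover have "S0 \<le> 0"
        proof (cases "real n * t = 2 * pi")
          case True then show ?thesis unfolding S0_def by simp
        next
          case False then show ?thesis unfolding S0_def using nt2 \<open>pi \<le> real n * t\<close>
            by (intro sin_le_zero) auto
        qed
        with \<open>S0 > 0\<close> show False by simp
      qed
      have tl: "t < pi / 3"
      proof -
        have "3 * t \<le> real n * t" using n0 t by (intro mult_right_mono) auto
        with nt show ?thesis by simp
      qed
      have n1t: "(real n + 1) * t < pi"
      proof (rule ccontr)
        assume "\<not> ?thesis"
        moreover have "(real n + 1) * t < 2 * pi" using nt tl t by (simp add: algebra_simps)
        ultimately have "S1 \<le> 0" unfolding S1_def by (intro sin_le_zero) auto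
        with \<open>S1 > 0\<close> show False by simp
      qed
      have "real n * t * S1 < (real n + 1) * t * S0"
        unfolding S1_def S0_def using t n0 n1t by (intro sinc_dec) (auto intro: mult_pos_pos)
      hence "t * (real n * S1) < t * (r * S1)" unfolding I' by (simp add: algebra_simps)
      hence "real n * S1 < r * S1" using t by simp
      hence rgt: "real n < r" using \<open>S1 > 0\<close> by simp
      have "t * S1 < (real n + 1) * t * sin t"
        unfolding S1_def using t n0 n1t by (intro sinc_dec) auto
      hence "t * S1 < t * (S1 * Y)" unfolding SY by (simp add: algebra_simps)
      hence "S1 < S1 * Y" using t by simp
      hence Y1: "Y > 1" using \<open>S1 > 0\<close> by simp
      have "real n ^ n < r ^ n" using rgt n by (intro power_strict_mono) auto
      also have "\<dots> < r ^ n * Y" using Y1 rn by simp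
      finally show False using R' \<open>e = 1\<close> by simp
    qed
  qed
qed




lemma poly_polar:
  "rcis r \<theta> ^ n * (rcis r \<theta> + of_nat (Suc n)) =
     rcis (r ^ Suc n) ((real n + 1) * \<theta>) + of_real ((real n + 1) * r ^ n) * cis (real n * \<theta>)"
proof -
  have "rcis r \<theta> ^ n * (rcis r \<theta> + of_nat (Suc n)) = rcis (r^n) (real n * \<theta>) * rcis r \<theta> + of_nat (Suc n) * rcis (r^n) (real n * \<theta>)"
    by (simp add: DeMoivre2 algebra_simps)
  also have "rcis (r^n) (real n * \<theta>) * rcis r \<theta> = rcis (r ^ Suc n) ((real n + 1) * \<theta>)"
    by (simp add: rcis_mult algebra_simps)
  also have "of_nat (Suc n) * rcis (r^n) (real n * \<theta>) = of_real ((real n + 1) * r ^ n) * cis (real n * \<theta>)"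
    by (simp add: rcis_def algebra_simps)
  finally show ?thesis .
qed

lemma polar_eqs:
  assumes "rcis r \<theta> ^ n * (rcis r \<theta> + of_nat (Suc n)) = of_nat n ^ n" "r > 0"
  shows "r * sin ((real n + 1) * \<theta>) + (real n + 1) * sin (real n * \<theta>) = 0"
    and "r ^ n * (r * cos ((real n + 1) * \<theta>) + (real n + 1) * cos (real n * \<theta>)) = real n ^ n"
proof -
  have e: "rcis (r ^ Suc n) ((real n + 1) * \<theta>) + of_real ((real n + 1) * r ^ n) * cis (real n * \<theta>) = of_nat n ^ n"
    using assms(1) poly_polar by metis
  have "Im (rcis (r ^ Suc n) ((real n + 1) * \<theta>) + of_real ((real n + 1) * r ^ n) * cis (real n * \<theta>)) = 0"
    unfolding e by simp
  hence "r ^ n * (r * sin ((real n + 1) * \<theta>) + (real n + 1) * sin (real n * \<theta>)) = 0"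
    by (simp add: algebra_simps)
  then show "r * sin ((real n + 1) * \<theta>) + (real n + 1) * sin (real n * \<theta>) = 0"
    using assms(2) by simp
  have "Re (rcis (r ^ Suc n) ((real n + 1) * \<theta>) + of_real ((real n + 1) * r ^ n) * cis (real n * \<theta>)) = real n ^ n"
    unfolding e by simp
  then show "r ^ n * (r * cos ((real n + 1) * \<theta>) + (real n + 1) * cos (real n * \<theta>)) = real n ^ n"
    by (simp add: algebra_simps)
qed

lemma dist_bound:
  fixes s r \<theta> \<beta> :: real
  assumes "s > 0" "r > 0" "0 < \<theta>" "\<theta> < pi - \<beta>" "0 < \<beta>" "\<beta> \<le> pi/2"
  shows "s * sin \<beta> < cmod (of_real s + rcis r \<theta>)"
proof (cases "\<theta> < pi/2")
  case True
  have "cos \<theta> > 0" using True assms by (intro cos_gt_zero) auto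
  hence "s < Re (of_real s + rcis r \<theta>)" using assms by simp
  also have "\<dots> \<le> cmod (of_real s + rcis r \<theta>)" using abs_Re_le_cmod by (rule abs_le_D1)
  finally have "s < cmod (of_real s + rcis r \<theta>)" .
  moreover have "s * sin \<beta> \<le> s" using assms by (simp add: mult_left_le_one_le)
  ultimately show ?thesis by linarith
next
  case False
  have "sin \<beta> < sin (pi - \<theta>)" using False assms by (intro sin_monotone_2pi) auto
  hence sb: "sin \<beta> < sin \<theta>" by simp
  define c where "c = cos \<theta>"
  define S where "S = sin \<theta>"
  have cs: "S^2 = 1 - c^2" unfolding S_def c_def by (simp add: sin_squared_eq)
  have "(s * S)^2 \<le> (s + r * c)^2 + (r * S)^2"
  proof -
    have "(s + r * c)^2 + (r * S)^2 - (s * S)^2 = (s * c + r)^2"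
      unfolding power_mult_distrib cs by (simp add: power2_eq_square algebra_simps)
    then show ?thesis by (smt (verit) zero_le_power2)
  qed
  hence "s * S \<le> cmod (of_real s + rcis r \<theta>)"
    unfolding cmod_def c_def S_def by (simp add: real_le_rsqrt)
  moreover have "s * sin \<beta> < s * S" using sb assms by (simp add: S_def)
  ultimately show ?thesis by linarith
qed

lemma roots_finite:
  assumes "s \<ge> 2"
  shows "finite {\<alpha>. psi s \<alpha> = 0}"
proof -
  define c :: complex where "c = (of_nat s - 1) ^ (s - 1)"
  define p where "p = [:of_nat s, 1:] * monom 1 (s - 1) - [:c:]"
  have pe: "poly p z = psi s z" for z
    by (simp add: p_def psi_def c_def poly_monom algebra_simps)
  have "c \<noteq> 0"
  proof -
    have "(of_nat s - 1 :: complex) = of_nat (s - 1)" using assms by (simp add: of_nat_diff)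
    moreover have "(of_nat (s - 1) :: complex) \<noteq> 0" using assms by simp
    ultimately show ?thesis unfolding c_def by simp
  qed
  moreover obtain k where "s = Suc (Suc k)" using assms by (metis add_2_eq_Suc le_Suc_ex)
  ultimately have "poly p 0 \<noteq> 0" by (simp add: p_def poly_monom)
  hence "p \<noteq> 0" by auto
  hence "finite {z. poly p z = 0}" by (rule poly_roots_finite)
  then show ?thesis using pe by simp
qed




lemma exists_upper_root:
  fixes n :: nat assumes n: "n \<ge> 3"
  shows "\<exists>\<alpha>. psi (Suc n) \<alpha> = 0 \<and> Im \<alpha> > 0"
proof -
  have n0: "real n \<ge> 3" using n by simp
  define a where "a = 2*pi/(real n + 1)"
  define b where "b = 2*pi/real n"
  define P where "P \<theta> = (real n + 1)^(n+1) * sin \<theta> * sin (real n * \<theta>)^n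
      + real n ^ n * (- sin ((real n + 1) * \<theta>))^(n+1)" for \<theta>
  define Q where "Q \<theta> = (-1)^(n+1) * P \<theta>" for \<theta>
  have a0: "0 < a" unfolding a_def by simp
  have ab: "a < b" unfolding a_def b_def using n0 by (simp add: field_simps)
  have bpi: "b < pi" unfolding b_def using n0 by (simp add: field_simps)
  have sa: "sin a > 0" using a0 ab bpi by (intro sin_gt_zero) auto
  have sb: "sin b > 0" using a0 ab bpi by (intro sin_gt_zero) auto
  have na: "real n * a = 2*pi - a" unfolding a_def using n0 by (simp add: field_simps)
  have n1a: "(real n + 1) * a = 2*pi" unfolding a_def using n0 by (simp add: field_simps)
  have nb: "real n * b = 2*pi" unfolding b_def using n0 by (simp add: field_simps)
  have n1b: "(real n + 1) * b = b + 2*pi" unfolding b_def using n0 by (simp add: field_simps)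
  have sna: "sin (real n * a) = - sin a" unfolding na by (simp add: sin_diff)
  have m1: "(-1::real)^(n+1) * (-1)^n = -1" by (cases "even n") simp_all
  have m2: "(-1::real)^(n+1) * (-1)^(n+1) = 1" by (cases "even n") simp_all
  have Qa: "Q a = - ((real n + 1)^(n+1) * sin a ^ (n+1))"
  proof -
    have "Q a = ((-1)^(n+1) * (-1)^n) * ((real n + 1)^(n+1) * (sin a * sin a ^ n))"
      unfolding Q_def P_def sna n1a power_minus[of "sin a"] by (simp add: mult_ac)
    also have "\<dots> = - ((real n + 1)^(n+1) * sin a ^ (n+1))" unfolding m1 by simp
    finally show ?thesis .
  qed
  have snb: "sin (real n * b) = 0" unfolding nb by simp
  have sn1b: "sin ((real n + 1) * b) = sin b" unfolding n1b by simp
  have z: "(0::real) ^ n = 0" using n by simp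
  have Qb: "Q b = real n ^ n * sin b ^ (n+1)"
  proof -
    have "Q b = ((-1)^(n+1) * (-1)^(n+1)) * (real n ^ n * sin b ^ (n+1))"
      unfolding Q_def P_def snb sn1b z power_minus[of "sin b"] by (simp add: mult_ac)
    also have "\<dots> = real n ^ n * sin b ^ (n+1)" unfolding m2 by simp
    finally show ?thesis .
  qed
  have Qa0: "Q a < 0" unfolding Qa using sa by simp
  have Qb0: "Q b > 0" unfolding Qb using sb n0 by simp
  have cont: "continuous_on {a..b} Q" unfolding Q_def P_def by (intro continuous_intros)
  obtain \<theta> where th: "a \<le> \<theta>" "\<theta> \<le> b" "Q \<theta> = 0"
    using IVT'[of Q a 0 b] Qa0 Qb0 ab cont by auto
  have tha: "a < \<theta>" using th Qa0 by (cases "\<theta> = a") auto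
  have thb: "\<theta> < b" using th Qb0 by (cases "\<theta> = b") auto
  have P0: "P \<theta> = 0" using th(3) unfolding Q_def by simp
  define D where "D = sin (real n * \<theta>)"
  define N where "N = - sin ((real n + 1) * \<theta>)"
  have D0: "D < 0" unfolding D_def
  proof (rule sin_lt_zero)
    have "real n * a < real n * \<theta>" using tha n0 by simp
    moreover have "pi \<le> real n * a" unfolding na a_def using n0 by (simp add: field_simps)
    ultimately show "pi < real n * \<theta>" by simp
    have "real n * \<theta> < real n * b" using thb n0 by simp
    then show "real n * \<theta> < 2 * pi" using nb by simp
  qed
  have N0: "N < 0"
  proof -
    have "(real n + 1) * a < (real n + 1) * \<theta>" using tha n0 by simp
    hence l: "0 < (real n + 1) * \<theta> - 2*pi" using n1a by simp
    have "(real n + 1) * \<theta> < (real n + 1) * b" using thb n0 by simp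
    hence u: "(real n + 1) * \<theta> - 2*pi < pi" using n1b bpi by simp
    have "sin ((real n + 1) * \<theta> - 2*pi) > 0" using l u by (intro sin_gt_zero) auto
    moreover have "sin ((real n + 1) * \<theta> - 2*pi) = sin ((real n + 1) * \<theta>)"
      by (simp add: sin_diff)
    ultimately show ?thesis unfolding N_def by simp
  qed
  define r where "r = (real n + 1) * D / N"
  have r0: "r > 0" unfolding r_def using D0 N0 n0 by (simp add: divide_neg_neg mult_pos_neg)
  have rN: "r * N = (real n + 1) * D" unfolding r_def using N0 by simp
  have th0: "0 < \<theta>" "\<theta> < pi" using a0 tha thb bpi by auto
  define \<alpha> where "\<alpha> = rcis r \<theta>"
  have Im0: "Im \<alpha> > 0" unfolding \<alpha>_def using r0 th0 by (simp add: sin_gt_zero)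
  define X where "X = r * cos ((real n + 1) * \<theta>) + (real n + 1) * cos (real n * \<theta>)"
  have st: "sin \<theta> = sin ((real n + 1) * \<theta>) * cos (real n * \<theta>) - cos ((real n + 1) * \<theta>) * D"
  proof -
    have "sin \<theta> = sin ((real n + 1) * \<theta> - real n * \<theta>)" by (simp add: algebra_simps)
    then show ?thesis unfolding sin_diff D_def .
  qed
  have NX: "- N * X = (real n + 1) * sin \<theta>"
  proof -
    have "- N * X = (r * N) * (- cos ((real n + 1) * \<theta>)) + (real n + 1) * sin ((real n + 1) * \<theta>) * cos (real n * \<theta>)"
      unfolding X_def N_def by (simp add: algebra_simps)
    also have "\<dots> = (real n + 1) * sin \<theta>" unfolding rN st by (simp add: algebra_simps)
    finally show ?thesis .
  qed
  have "r ^ n * X * N ^ (n+1) = (r * N) ^ n * (X * N)" by (simp add: power_mult_distrib algebra_simps)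
  also have "\<dots> = - ((real n + 1) ^ (n+1) * sin \<theta> * D ^ n)"
  proof -
    have XN: "X * N = - ((real n + 1) * sin \<theta>)" using NX by (simp add: mult.commute)
    show ?thesis unfolding rN XN power_mult_distrib by (simp add: mult_ac)
  qed
  also have "\<dots> = real n ^ n * N ^ (n+1)" using P0 unfolding P_def D_def N_def by (simp add: algebra_simps)
  finally have "r ^ n * X * N ^ (n+1) = real n ^ n * N ^ (n+1)" .
  hence ReX: "r ^ n * X = real n ^ n" using N0 by simp
  have "\<alpha> ^ n * (\<alpha> + of_nat (Suc n)) = of_nat n ^ n"
    unfolding \<alpha>_def poly_polar
  proof (rule complex_eqI)
    show "Re (rcis (r ^ Suc n) ((real n + 1) * \<theta>) + complex_of_real ((real n + 1) * r ^ n) * cis (real n * \<theta>)) =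
       Re (of_nat n ^ n)"
      using ReX unfolding X_def by (simp add: algebra_simps)
    have "r ^ n * (r * (-N) + (real n + 1) * D) = 0" using rN by (simp add: algebra_simps)
    then show "Im (rcis (r ^ Suc n) ((real n + 1) * \<theta>) + complex_of_real ((real n + 1) * r ^ n) * cis (real n * \<theta>)) =
       Im (of_nat n ^ n)"
      unfolding N_def D_def by (simp add: algebra_simps)
  qed
  hence "psi (Suc n) \<alpha> = 0" unfolding psi_def by simp
  with Im0 show ?thesis by blast
qed




lemma root_arg_bound:
  fixes n :: nat assumes n: "n \<ge> 3" and ps: "psi (Suc n) \<alpha> = 0" and im: "Im \<alpha> > 0"
  shows "(odd n \<longrightarrow> Arg \<alpha> < pi - pi / real n) \<and> (even n \<longrightarrow> Arg \<alpha> < pi - 2 * pi / real n)"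
proof -
  define r where "r = cmod \<alpha>"
  define \<theta> where "\<theta> = Arg \<alpha>"
  have a0: "\<alpha> \<noteq> 0" using im by auto
  have r0: "r > 0" using a0 by (simp add: r_def)
  have th: "0 < \<theta>" "\<theta> < pi" using im Arg_lt_pi[of \<alpha>] by (auto simp: \<theta>_def)
  have ar: "\<alpha> = rcis r \<theta>" unfolding r_def \<theta>_def by (simp add: rcis_cmod_Arg)
  have "\<alpha> ^ n * (\<alpha> + of_nat (Suc n)) = of_nat n ^ n" using ps unfolding psi_def by simp
  hence eq: "rcis r \<theta> ^ n * (rcis r \<theta> + of_nat (Suc n)) = of_nat n ^ n" using ar by simp
  show ?thesis unfolding \<theta>_def[symmetric]
    using angle_bound[OF n r0 th polar_eqs(1)[OF eq r0] polar_eqs(2)[OF eq r0]] .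
qed

lemma rho_bound:
  fixes n :: nat and \<beta> :: real
  assumes n: "n \<ge> 3" and b: "0 < \<beta>" "\<beta> \<le> pi/2"
    and H: "\<And>\<alpha>. psi (Suc n) \<alpha> = 0 \<Longrightarrow> Im \<alpha> > 0 \<Longrightarrow> Arg \<alpha> < pi - \<beta>"
  shows "rho_m (Suc n) > real (Suc n) * sin \<beta>"
proof -
  define A where "A = {\<alpha>. psi (Suc n) \<alpha> = 0 \<and> Im \<alpha> > 0}"
  have eqs: "{cmod (of_nat (Suc n) + \<alpha>) | \<alpha>. psi (Suc n) \<alpha> = 0 \<and> Im \<alpha> > 0}
      = (\<lambda>\<alpha>. cmod (of_nat (Suc n) + \<alpha>)) ` A" unfolding A_def by blast
  have fin: "finite A"
  proof -
    have "finite {\<alpha>. psi (Suc n) \<alpha> = 0}" using roots_finite[of "Suc n"] n by simp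
    then show ?thesis unfolding A_def by (rule rev_finite_subset) auto
  qed
  have ne: "A \<noteq> {}" using exists_upper_root[OF n] unfolding A_def by blast
  have "real (Suc n) * sin \<beta> < Min ((\<lambda>\<alpha>. cmod (of_nat (Suc n) + \<alpha>)) ` A)"
  proof (subst Min_gr_iff)
    show "finite ((\<lambda>\<alpha>. cmod (of_nat (Suc n) + \<alpha>)) ` A)" using fin by simp
    show "(\<lambda>\<alpha>. cmod (of_nat (Suc n) + \<alpha>)) ` A \<noteq> {}" using ne by simp
    show "\<forall>a\<in>(\<lambda>\<alpha>. cmod (of_nat (Suc n) + \<alpha>)) ` A. real (Suc n) * sin \<beta> < a"
    proof
      fix x assume "x \<in> (\<lambda>\<alpha>. cmod (of_nat (Suc n) + \<alpha>)) ` A"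
      then obtain \<alpha> where x: "x = cmod (of_nat (Suc n) + \<alpha>)" and ps: "psi (Suc n) \<alpha> = 0" and im: "Im \<alpha> > 0"
        unfolding A_def by blast
      have a0: "\<alpha> \<noteq> 0" using im by auto
      have th: "0 < Arg \<alpha>" using im Arg_lt_pi[of \<alpha>] by auto
      have "real (Suc n) * sin \<beta> < cmod (of_real (real (Suc n)) + rcis (cmod \<alpha>) (Arg \<alpha>))"
        using a0 th H[OF ps im] b by (intro dist_bound) auto
      then show "real (Suc n) * sin \<beta> < x" unfolding x rcis_cmod_Arg by simp
    qed
  qed
  then show ?thesis unfolding rho_m_def eqs .
qed

lemma even_pi_bound:
  fixes n :: nat assumes n: "n \<ge> 3"
  shows "real (Suc n) * sin (pi / real n) > pi"
proof -
  define u where "u = real n"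
  have u3: "u \<ge> 3" using n by (simp add: u_def)
  define x where "x = pi / u"
  have x0: "x \<ge> 0" using u3 by (simp add: x_def)
  have "pi < 3.15" using pi_approx by simp
  hence "pi^2 < 3.15^2" using pi_gt_zero by (intro power_strict_mono) auto
  moreover have "(3.15::real)^2 < 10" by (simp add: power2_eq_square)
  ultimately have pi2: "pi^2 < 10" by linarith
  have key: "6 * u^2 > pi^2 * (u + 1)"
  proof -
    have "pi^2 * (u + 1) \<le> 10 * (u + 1)" using pi2 u3 by (intro mult_right_mono) auto
    also have "10 * (u + 1) < 6 * u^2"
    proof -
      have "3 * u \<le> u * u" using u3 by (intro mult_right_mono) auto
      hence "18 * u \<le> 6 * (u * u)" by linarith
      moreover have "10 * (u + 1) < 18 * u" using u3 by (simp add: algebra_simps)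
      ultimately show ?thesis unfolding power2_eq_square by linarith
    qed
    finally show ?thesis .
  qed
  have "pi < (u + 1) * (x - x^3/6)"
  proof -
    have "(u + 1) * (x - x^3/6) - pi = pi * (6 * u^2 - pi^2 * (u + 1)) / (6 * u^3)"
      unfolding x_def using u3 by (simp add: field_simps power2_eq_square power3_eq_cube)
    moreover have "pi * (6 * u^2 - pi^2 * (u + 1)) / (6 * u^3) > 0" using key u3 by simp
    ultimately show ?thesis by linarith
  qed
  also have "\<dots> \<le> (u + 1) * sin x" using sin_cubic[OF x0] u3 by (intro mult_left_mono) auto
  finally show ?thesis by (simp add: u_def x_def add.commute)
qed

theorem mainTheorem18:
  fixes s :: nat
  assumes "s \<ge> 4"
  shows "(even s \<longrightarrow> rho_m s > real s * sin (pi / (real s - 1)) \<and> real s * sin (pi / (real s - 1)) > pi)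
       \<and> (odd s \<and> s \<ge> 7 \<longrightarrow> rho_m s > real s * sin (2 * pi / (real s - 1)))
       \<and> (s = 5 \<longrightarrow> rho_m s > 5 * sin (2 * pi / 5))"
proof -
  obtain n where sn: "s = Suc n" using assms by (cases s) auto
  have n: "n \<ge> 3" using assms sn by simp
  have n0: "real n \<ge> 3" using n by simp
  have rs: "real s - 1 = real n" using sn by simp
  show ?thesis
  proof (intro conjI impI)
    assume ev: "even s"
    hence od: "odd n" using sn by simp
    have "rho_m (Suc n) > real (Suc n) * sin (pi / real n)"
    proof (rule rho_bound[OF n])
      show "0 < pi / real n" using n0 by simp
      show "pi / real n \<le> pi / 2" using n0 by (intro divide_left_mono) auto
      fix \<alpha> assume "psi (Suc n) \<alpha> = 0" "Im \<alpha> > 0"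
      then show "Arg \<alpha> < pi - pi / real n" using root_arg_bound[OF n] od by blast
    qed
    then show "rho_m s > real s * sin (pi / (real s - 1))" using sn by simp
    show "real s * sin (pi / (real s - 1)) > pi" using even_pi_bound[OF n] sn by simp
  next
    assume h: "odd s \<and> 7 \<le> s"
    hence ev: "even n" and n6: "real n \<ge> 6" using sn by auto
    have "rho_m (Suc n) > real (Suc n) * sin (2 * pi / real n)"
    proof (rule rho_bound[OF n])
      show "0 < 2 * pi / real n" using n0 by simp
      show "2 * pi / real n \<le> pi / 2" using n6 by (simp add: field_simps)
      fix \<alpha> assume "psi (Suc n) \<alpha> = 0" "Im \<alpha> > 0"
      then show "Arg \<alpha> < pi - 2 * pi / real n" using root_arg_bound[OF n] ev by blast
    qed
    then show "rho_m s > real s * sin (2 * pi / (real s - 1))" using sn by simp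
  next
    assume s5: "s = 5"
    hence n4: "n = 4" using sn by simp
    have "rho_m (Suc 4) > real (Suc 4) * sin (2 * pi / real (4::nat))"
    proof (rule rho_bound)
      show "0 < 2 * pi / real (4::nat)" by simp
      show "2 * pi / real (4::nat) \<le> pi / 2" by simp
      fix \<alpha> assume "psi (Suc 4) \<alpha> = 0" "Im \<alpha> > 0"
      then show "Arg \<alpha> < pi - 2 * pi / real (4::nat)" using root_arg_bound[of 4 \<alpha>] by simp
    qed simp
    moreover have "sin (2 * pi / real (4::nat)) = 1" by simp
    ultimately have r5: "rho_m 5 > 5" by (simp add: numeral_eq_Suc)
    have "5 * sin (2 * pi / 5) \<le> (5::real)" by simp
    then show "rho_m s > 5 * sin (2 * pi / 5)" unfolding s5 using r5 by linarith
  qed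
qed


end
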